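(* For positive integers $d$ and $q$, $\hom(K_{d,d}, H_q) \leq 2q \cdot c_q^{2d}$.
   Context: $K_{d,d}$ is the complete bipartite graph with parts of size $d$. $H_q$ is the graph (loops allowed) on vertex set $\{1,\dots,q\}$ in which $u,v$ (possibly equal) are adjacent iff $u+v \geq q$. $\hom(G,H)$ is the number of graph homomorphisms from $G$ to $H$. For $q \geq 1$, $c_q := \sqrt{\lfloor (q+2)^2/4 \rfloor}$. *)

theory Defs
  imports Complex_Main "HOL-Library.FuncSet"
begin

definition hom_count ::
  "'a set \<Rightarrow> ('a \<Rightarrow> 'a \<Rightarrow> bool) \<Rightarrow> 'b set \<Rightarrow> ('b \<Rightarrow> 'b \<Rightarrow> bool) \<Rightarrow> nat" where
  "hom_count VG EG VH EH =
     card {f \<in> VG \<rightarrow>\<^sub>E VH. \<forall>u\<in>VG. \<forall>v\<in>VG. EG u v \<longrightarrow> EH (f u) (f v)}"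

definition Kdd_V :: "nat \<Rightarrow> (nat \<times> bool) set" where
  "Kdd_V d = {..<d} \<times> UNIV"

definition Kdd_E :: "(nat \<times> bool) \<Rightarrow> (nat \<times> bool) \<Rightarrow> bool" where
  "Kdd_E x y \<longleftrightarrow> snd x \<noteq> snd y"

definition Hq_V :: "nat \<Rightarrow> nat set" where
  "Hq_V q = {1..q}"

definition Hq_E :: "nat \<Rightarrow> nat \<Rightarrow> nat \<Rightarrow> bool" where
  "Hq_E q u v \<longleftrightarrow> u + v \<ge> q"

definition c_q :: "nat \<Rightarrow> real" where
  "c_q q = sqrt (real_of_int \<lfloor>(real q + 2)^2 / 4\<rfloor>)"

end

theory Submission
  imports Defs
begin

lemma card_T:
  fixes A B :: "nat set"
  shows "card (PiE (Kdd_V d) (\<lambda>x. if snd x then A else B)) = (card A * card B) ^ d"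
proof -
  have "card (PiE (Kdd_V d) (\<lambda>x. if snd x then A else B))
        = (\<Prod>x\<in>{..<d} \<times> UNIV. card (if snd x then A else B))"
    unfolding Kdd_V_def by (simp add: card_PiE)
  also have "\<dots> = (\<Prod>i\<in>{..<d}. \<Prod>b\<in>(UNIV::bool set). card (if snd (i,b) then A else B))"
    using prod.cartesian_product[of "\<lambda>i b. card (if snd (i,b) then A else B)" UNIV "{..<d}"]
    by (simp add: case_prod_beta')
  also have "\<dots> = (\<Prod>i\<in>{..<d}. card A * card B)"
    by (simp add: UNIV_bool mult.commute)
  also have "\<dots> = (card A * card B) ^ d" by simp
  finally show ?thesis .
qed

lemma prod_bound:
  fixes a q :: nat
  assumes "a \<le> q"
  shows "real ((q - a + 1) * (a + 1)) \<le> (c_q q)^2"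
proof -
  have "real ((q - a + 1) * (a + 1)) = (real q - real a + 1) * (real a + 1)"
    using assms by (simp only: of_nat_mult of_nat_add of_nat_diff[OF assms] of_nat_1)
  also have "\<dots> \<le> (real q + 2)^2 / 4"
  proof -
    have "(real q + 2)^2 / 4 - (real q - real a + 1) * (real a + 1) = (real q - 2 * real a)^2 / 4"
      by (simp add: power2_eq_square field_simps)
    moreover have "(real q - 2 * real a)^2 / 4 \<ge> 0" by simp
    ultimately show ?thesis by linarith
  qed
  finally have h: "real ((q - a + 1) * (a + 1)) \<le> (real q + 2)^2 / 4" .
  have "int ((q - a + 1) * (a + 1)) \<le> \<lfloor>(real q + 2)^2 / 4\<rfloor>"
    using h by (simp add: le_floor_iff)
  hence "real ((q - a + 1) * (a + 1)) \<le> real_of_int \<lfloor>(real q + 2)^2 / 4\<rfloor>"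
    by (metis of_int_le_iff of_int_of_nat_eq)
  moreover have "real_of_int \<lfloor>(real q + 2)^2 / 4\<rfloor> \<ge> 0" by simp
  ultimately show ?thesis unfolding c_q_def by simp
qed

theorem lemma3p5:
  fixes d q :: nat
  assumes "d \<ge> 1" and "q \<ge> 1"
  shows "real (hom_count (Kdd_V d) Kdd_E (Hq_V q) (Hq_E q)) \<le> 2 * real q * (c_q q) ^ (2 * d)"
proof -
  define S where "S = {f \<in> Kdd_V d \<rightarrow>\<^sub>E Hq_V q. \<forall>u\<in>Kdd_V d. \<forall>v\<in>Kdd_V d. Kdd_E u v \<longrightarrow> Hq_E q (f u) (f v)}"
  define T where "T a = PiE (Kdd_V d) (\<lambda>x. if snd x then {a..q} else {q-a..q})" for a
  have sub: "S \<subseteq> (\<Union>a\<in>{1..q}. T a)"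
  proof
    fix f assume f: "f \<in> S"
    define L where "L = {..<d} \<times> {True}"
    have Lsub: "L \<subseteq> Kdd_V d" unfolding L_def Kdd_V_def by auto
    have Lne: "L \<noteq> {}" "finite L" using assms(1) unfolding L_def by (auto simp: lessThan_empty_iff)
    define a where "a = Min (f ` L)"
    have "a \<in> f ` L" unfolding a_def using Lne by simp
    then obtain l0 where l0: "l0 \<in> L" "f l0 = a" by auto
    have fr: "\<And>x. x \<in> Kdd_V d \<Longrightarrow> f x \<in> {1..q}" using f unfolding S_def Hq_V_def by auto
    have a1: "a \<in> {1..q}" using fr[of l0] l0 Lsub by (metis subsetD)
    have "f \<in> T a" unfolding T_def
    proof (rule PiE_I)
      fix x assume x: "x \<in> Kdd_V d"
      show "f x \<in> (if snd x then {a..q} else {q-a..q})"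
      proof (cases "snd x")
        case True
        hence "x \<in> L" using x unfolding L_def Kdd_V_def by (cases x) auto
        hence "a \<le> f x" unfolding a_def using Lne by simp
        thus ?thesis using True fr[OF x] by auto
      next
        case False
        have "snd l0" using l0 unfolding L_def by auto
        hence "Kdd_E l0 x" using False unfolding Kdd_E_def by auto
        hence "Hq_E q (f l0) (f x)" using f x l0 Lsub unfolding S_def by auto
        thus ?thesis using False fr[OF x] l0 unfolding Hq_E_def by auto
      qed
    next
      fix x assume "x \<notin> Kdd_V d" thus "f x = undefined" using f unfolding S_def by auto
    qed
    thus "f \<in> (\<Union>a\<in>{1..q}. T a)" using a1 by auto
  qed
  have cardT: "real (card (T a)) \<le> (c_q q)^(2*d)" if "a \<in> {1..q}" for a
  proof -
    have c1: "card {a..q} = q - a + 1" using that by (simp add: Suc_diff_le)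
    have c2: "card {q-a..q} = a + 1" using that by simp
    have "card (T a) = ((q - a + 1) * (a + 1)) ^ d"
      unfolding T_def card_T c1 c2 by (rule refl)
    hence "real (card (T a)) = (real ((q - a + 1) * (a + 1))) ^ d" by simp
    also have "\<dots> \<le> ((c_q q)^2) ^ d"
      using prod_bound[of a q] that by (intro power_mono) auto
    also have "\<dots> = (c_q q)^(2*d)" by (simp add: power_mult)
    finally show ?thesis .
  qed
  have finT: "finite (T a)" for a unfolding T_def Kdd_V_def by (intro finite_PiE) auto
  have "card S \<le> card (\<Union>a\<in>{1..q}. T a)"
    using sub finT by (intro card_mono) auto
  also have "\<dots> \<le> (\<Sum>a\<in>{1..q}. card (T a))" by (rule card_UN_le) simp
  finally have "real (card S) \<le> (\<Sum>a\<in>{1..q}. real (card (T a)))"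
    by (metis of_nat_le_iff of_nat_sum)
  also have "\<dots> \<le> (\<Sum>a\<in>{1..q}. (c_q q)^(2*d))" by (intro sum_mono cardT)
  also have "\<dots> = real q * (c_q q)^(2*d)" by simp
  also have "\<dots> \<le> 2 * real q * (c_q q)^(2*d)" by simp
  finally show ?thesis unfolding hom_count_def S_def .
qed

end
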